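(* Let $(\Omega,\mathcal F,\mathbb P)$ be a nonatomic probability space, $X$ an integrable random vector in $\mathbb R^N$ with $\mathbb E(X)=0$, and $Y$ a square-integrable random vector in $\mathbb R^d$. Let $\mu$ be the uniform measure on $[0,1]^d$. Suppose there exist functions $\varphi:[0,1]^d\to\mathbb R$ and $b:[0,1]^d\to\mathbb R^N$ and a random vector $U$ such that (i) for $m$-a.e. $x$ (where $m=\mathrm{Law}(X)$), the map $u\mapsto \varphi(u)+b(u)\cdot x$ is convex and smooth on $[0,1]^d$; (ii) $\mathrm{Law}(U)=\mu$ and $\mathbb E(X\mid U)=0$; (iii) $Y=\nabla\varphi(U)+Db(U)^T X$ almost surely, where $Db$ is the Jacobian matrix of $b$. Then $U$ solves the problem $$\max\{\mathbb E(V\cdot Y)\;:\;\mathrm{Law}(V)=\mu,\ \mathbb E(X\mid V)=0\}.$$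
   Context: $\mathbb E(X\mid V)=0$ means that $X$ is mean-independent of $V$. Note that $\nabla\varphi(u)+Db(u)^Tx$ is the gradient in $u$ of $u\mapsto\varphi(u)+b(u)\cdot x$. *)

theory Defs
  imports "HOL-Analysis.Analysis" "HOL-Probability.Probability"
begin

definition nonatomic :: "'a measure \<Rightarrow> bool" where
  "nonatomic M \<longleftrightarrow> (\<forall>A\<in>sets M. 0 < measure M A \<longrightarrow>
      (\<exists>B\<in>sets M. B \<subseteq> A \<and> 0 < measure M B \<and> measure M B < measure M A))"

definition unit_cube :: "(real^'d) set" where
  "unit_cube = cbox 0 One"

definition unif_cube :: "(real^'d) measure" where
  "unif_cube = uniform_measure lborel unit_cube"

definition mean_indep_zero :: "'a measure \<Rightarrow> ('a \<Rightarrow> real^'n) \<Rightarrow> ('a \<Rightarrow> 'b::topological_space) \<Rightarrow> bool" where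
  "mean_indep_zero M X V \<longleftrightarrow>
     (\<forall>i. AE \<omega> in M. real_cond_exp M (vimage_algebra (space M) V borel) (\<lambda>\<omega>. X \<omega> $ i) \<omega> = 0)"

definition feasible :: "'a measure \<Rightarrow> ('a \<Rightarrow> real^'n) \<Rightarrow> ('a \<Rightarrow> real^'d) \<Rightarrow> bool" where
  "feasible M X V \<longleftrightarrow> V \<in> borel_measurable M \<and> distr M lborel V = unif_cube \<and> mean_indep_zero M X V"

end

theory Submission
  imports Defs
begin

lemma convex_grad:
  fixes f :: "'a::real_normed_vector \<Rightarrow> real"
  assumes cv: "convex_on S f" and x: "x\<in>S" and y: "y\<in>S"
    and d: "(f has_derivative f') (at x within S)"
  shows "f' (y - x) \<le> f y - f x"
proof -
  let ?h = "\<lambda>t::real. x + t *\<^sub>R (y - x)"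
  have cS: "convex S" using cv convex_on_imp_convex by blast
  have hS: "?h t \<in> S" if "t \<in> {0..1}" for t
  proof -
    have "?h t = (1 - t) *\<^sub>R x + t *\<^sub>R y" by (simp add: algebra_simps)
    then show ?thesis using convexD[OF cS x y, of "1-t" t] that by auto
  qed
  have lin: "linear f'" using d has_derivative_linear by blast
  have hd: "(?h has_derivative (\<lambda>t. t *\<^sub>R (y-x))) (at 0 within {0..1})"
    by (auto intro!: derivative_eq_intros)
  have d2: "(f has_derivative f') (at (?h 0) within (?h ` {0..1}))"
  proof -
    have "?h ` {0..1} \<subseteq> S" using hS by blast
    then show ?thesis using has_derivative_subset[OF d] by simp
  qed
  have "((f \<circ> ?h) has_derivative (f' \<circ> (\<lambda>t. t *\<^sub>R (y-x)))) (at 0 within {0..1})"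
    using diff_chain_within[OF hd d2] .
  moreover have "f' \<circ> (\<lambda>t. t *\<^sub>R (y-x)) = (*) (f' (y - x))"
    using linear_scale[OF lin] by (auto simp: fun_eq_iff)
  ultimately have "((f \<circ> ?h) has_field_derivative f' (y - x)) (at 0 within {0..1})"
    by (simp add: has_field_derivative_def)
  then have lim: "((\<lambda>t. (f (?h t) - f x) / t) \<longlongrightarrow> f' (y - x)) (at 0 within {0..1})"
    by (simp add: has_field_derivative_iff)
  have ev: "eventually (\<lambda>t. (f (?h t) - f x) / t \<le> f y - f x) (at 0 within {0..1::real})"
    unfolding eventually_at_filter
  proof (rule always_eventually, intro allI impI)
    fix t :: real assume t: "t \<noteq> 0" "t \<in> {0..1}"
    have "?h t = (1 - t) *\<^sub>R x + t *\<^sub>R y" by (simp add: algebra_simps)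
    then have "f (?h t) \<le> (1 - t) * f x + t * f y"
      using convex_onD[OF cv, of t x y] t x y by auto
    then have "f (?h t) - f x \<le> t * (f y - f x)" by (simp add: algebra_simps)
    then show "(f (?h t) - f x) / t \<le> f y - f x" using t
      by (simp add: divide_le_eq mult.commute)
  qed
  have nb: "at 0 within {0..1::real} \<noteq> bot"
    by (simp add: at_within_Icc_at_right)
  show ?thesis using tendsto_le[OF nb tendsto_const lim ev] .
qed


lemma feas_facts:
  fixes M :: "'a measure" and X :: "'a \<Rightarrow> real^'n" and Y :: "'a \<Rightarrow> real^'d"
    and W :: "'a \<Rightarrow> real^'d" and p :: "real^'d \<Rightarrow> real" and q :: "real^'d \<Rightarrow> real^'n"
  assumes P: "prob_space M"
    and Xm: "X \<in> borel_measurable M" and Xi: "integrable M X"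
    and Ym: "Y \<in> borel_measurable M" and Yi: "integrable M (\<lambda>\<omega>. (norm (Y \<omega>))\<^sup>2)"
    and pm: "p \<in> borel_measurable borel" and pb: "\<And>u. \<bar>p u\<bar> \<le> Bp"
    and qm: "q \<in> borel_measurable borel" and qb: "\<And>u. norm (q u) \<le> Bq"
    and F: "feasible M X W"
  shows "AE \<omega> in M. W \<omega> \<in> unit_cube"
    and "integrable M (\<lambda>\<omega>. p (W \<omega>))"
    and "(\<integral>\<omega>. p (W \<omega>) \<partial>M) = (\<integral>u. p u \<partial>unif_cube)"
    and "integrable M (\<lambda>\<omega>. q (W \<omega>) \<bullet> X \<omega>)"
    and "(\<integral>\<omega>. q (W \<omega>) \<bullet> X \<omega> \<partial>M) = 0"
    and "integrable M (\<lambda>\<omega>. W \<omega> \<bullet> Y \<omega>)"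
proof -
  interpret prob_space M by (rule P)
  have Wm[measurable]: "W \<in> borel_measurable M" and D: "distr M lborel W = unif_cube"
    and MI: "mean_indep_zero M X W" using F by (auto simp: feasible_def)
  have [measurable]: "X \<in> borel_measurable M" "Y \<in> borel_measurable M" using Xm Ym by auto
  have vn[measurable]: "(\<lambda>x. x $ i) \<in> borel_measurable (borel :: (real^'k) measure)" for i
    by (rule borel_measurable_continuous_onI) (intro continuous_intros)
  have Wl: "W \<in> measurable M lborel" using Wm by simp
  have Cb: "unit_cube \<in> sets lborel" unfolding unit_cube_def by simp
  have "AE x in unif_cube. x \<in> unit_cube"
    unfolding unif_cube_def by (rule AE_uniform_measureI[OF Cb]) simp
  then have "AE x in distr M lborel W. x \<in> unit_cube" unfolding D .
  then show AEW: "AE \<omega> in M. W \<omega> \<in> unit_cube" using AE_distrD[OF Wl] by blast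
  show pi: "integrable M (\<lambda>\<omega>. p (W \<omega>))"
  proof (rule Bochner_Integration.integrable_bound[of _ "\<lambda>_. Bp"])
    show "integrable M (\<lambda>_. Bp)" by simp
    show "(\<lambda>\<omega>. p (W \<omega>)) \<in> borel_measurable M" using pm by measurable
    have "norm (p (W \<omega>)) \<le> norm Bp" for \<omega> using pb[of "W \<omega>"] by auto
    then show "AE \<omega> in M. norm (p (W \<omega>)) \<le> norm Bp" by simp
  qed
  have "(\<integral>u. p u \<partial>unif_cube) = (\<integral>u. p u \<partial>distr M lborel W)" using D by simp
  also have "\<dots> = (\<integral>\<omega>. p (W \<omega>) \<partial>M)" by (rule integral_distr[OF Wl]) (use pm in simp)
  finally show "(\<integral>\<omega>. p (W \<omega>) \<partial>M) = (\<integral>u. p u \<partial>unif_cube)" by simp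
  define Fa where "Fa = vimage_algebra (space M) W borel"
  have sub: "subalgebra M Fa" unfolding subalgebra_def Fa_def
    using Wm by (auto simp: sets_vimage_algebra2 measurable_def)
  interpret fms: finite_measure_subalgebra M Fa
    by unfold_locales (rule sub)
  have compi: "integrable M (\<lambda>\<omega>. q (W \<omega>) $ i * X \<omega> $ i)" and compz: "(\<integral>\<omega>. q (W \<omega>) $ i * X \<omega> $ i \<partial>M) = 0" for i
  proof -
    have Xii: "integrable M (\<lambda>\<omega>. X \<omega> $ i)"
      by (rule Bochner_Integration.integrable_bound[OF Xi]) (auto simp: component_le_norm_cart)
    have qim: "(\<lambda>\<omega>. q (W \<omega>) $ i) \<in> borel_measurable Fa"
    proof -
      have "W \<in> measurable Fa borel" unfolding Fa_def by (rule measurable_vimage_algebra1) simp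
      then show ?thesis using qm by measurable
    qed
    show ii: "integrable M (\<lambda>\<omega>. q (W \<omega>) $ i * X \<omega> $ i)"
    proof (rule Bochner_Integration.integrable_bound[of _ "\<lambda>\<omega>. Bq * X \<omega> $ i"])
      show "integrable M (\<lambda>\<omega>. Bq * X \<omega> $ i)" using Xii by simp
      show "(\<lambda>\<omega>. q (W \<omega>) $ i * X \<omega> $ i) \<in> borel_measurable M" using qm by measurable
      have "norm (q (W \<omega>) $ i * X \<omega> $ i) \<le> norm (Bq * X \<omega> $ i)" for \<omega>
      proof -
        have "\<bar>q (W \<omega>) $ i\<bar> \<le> Bq" using qb[of "W \<omega>"] component_le_norm_cart[of "q (W \<omega>)" i]
          by simp
        then have "\<bar>q (W \<omega>) $ i\<bar> * \<bar>X \<omega> $ i\<bar> \<le> Bq * \<bar>X \<omega> $ i\<bar>" by (rule mult_right_mono) simp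
        moreover have "0 \<le> Bq" using qb[of 0] norm_ge_zero order_trans by blast
        ultimately show ?thesis by (simp add: abs_mult)
      qed
      then show "AE \<omega> in M. norm (q (W \<omega>) $ i * X \<omega> $ i) \<le> norm (Bq * X \<omega> $ i)" by simp
    qed
    have "(\<integral>\<omega>. q (W \<omega>) $ i * X \<omega> $ i \<partial>M) = (\<integral>\<omega>. q (W \<omega>) $ i * real_cond_exp M Fa (\<lambda>\<omega>. X \<omega> $ i) \<omega> \<partial>M)"
      using fms.real_cond_exp_intg(2)[OF ii qim] by simp
    also have "\<dots> = 0"
    proof (rule integral_eq_zero_AE)
      have "AE \<omega> in M. real_cond_exp M Fa (\<lambda>\<omega>. X \<omega> $ i) \<omega> = 0"
        using MI unfolding mean_indep_zero_def Fa_def by blast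
      then show "AE \<omega> in M. q (W \<omega>) $ i * real_cond_exp M Fa (\<lambda>\<omega>. X \<omega> $ i) \<omega> = 0" by auto
    qed
    finally show "(\<integral>\<omega>. q (W \<omega>) $ i * X \<omega> $ i \<partial>M) = 0" .
  qed
  have eq: "(\<lambda>\<omega>. q (W \<omega>) \<bullet> X \<omega>) = (\<lambda>\<omega>. \<Sum>i\<in>UNIV. q (W \<omega>) $ i * X \<omega> $ i)"
    by (simp add: inner_vec_def)
  show "integrable M (\<lambda>\<omega>. q (W \<omega>) \<bullet> X \<omega>)" unfolding eq using compi by auto
  show "(\<integral>\<omega>. q (W \<omega>) \<bullet> X \<omega> \<partial>M) = 0" unfolding eq
    using compi compz by (simp add: integral_sum)
  have "bounded (unit_cube :: (real^'d) set)" unfolding unit_cube_def by (rule bounded_cbox)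
  then obtain Bc where Bc: "\<And>u. u \<in> (unit_cube :: (real^'d) set) \<Longrightarrow> norm u \<le> Bc" and Bc0: "0 \<le> Bc"
    unfolding bounded_pos by (meson less_imp_le)
  have nYi: "integrable M (\<lambda>\<omega>. norm (Y \<omega>))"
  proof (rule Bochner_Integration.integrable_bound[of _ "\<lambda>\<omega>. 1 + (norm (Y \<omega>))\<^sup>2"])
    show "integrable M (\<lambda>\<omega>. 1 + (norm (Y \<omega>))\<^sup>2)" using Yi by simp
    show "(\<lambda>\<omega>. norm (Y \<omega>)) \<in> borel_measurable M" by measurable
    have "norm (Y \<omega>) \<le> 1 + (norm (Y \<omega>))\<^sup>2" for \<omega>
    proof -
      have "0 \<le> (norm (Y \<omega>) - 1)\<^sup>2" by simp
      then have "2 * norm (Y \<omega>) \<le> 1 + (norm (Y \<omega>))\<^sup>2" by (simp add: power2_diff)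
      then show ?thesis using norm_ge_zero[of "Y \<omega>"] by linarith
    qed
    then show "AE \<omega> in M. norm (norm (Y \<omega>)) \<le> norm (1 + (norm (Y \<omega>))\<^sup>2)" by simp
  qed
  show "integrable M (\<lambda>\<omega>. W \<omega> \<bullet> Y \<omega>)"
  proof (rule Bochner_Integration.integrable_bound[of _ "\<lambda>\<omega>. Bc * norm (Y \<omega>)"])
    show "integrable M (\<lambda>\<omega>. Bc * norm (Y \<omega>))" using nYi by simp
    show "(\<lambda>\<omega>. W \<omega> \<bullet> Y \<omega>) \<in> borel_measurable M" by measurable
    show "AE \<omega> in M. norm (W \<omega> \<bullet> Y \<omega>) \<le> norm (Bc * norm (Y \<omega>))"
      using AEW
    proof eventually_elim
      case (elim \<omega>)
      have "\<bar>W \<omega> \<bullet> Y \<omega>\<bar> \<le> norm (W \<omega>) * norm (Y \<omega>)" by (rule Cauchy_Schwarz_ineq2)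
      also have "\<dots> \<le> Bc * norm (Y \<omega>)" using Bc[OF elim] by (simp add: mult_right_mono)
      finally show ?case using Bc0 by simp
    qed
  qed
qed



theorem mainTheorem1:
  fixes M :: "'a measure"
    and X :: "'a \<Rightarrow> real^'n" and Y :: "'a \<Rightarrow> real^'d" and U :: "'a \<Rightarrow> real^'d"
    and \<phi> :: "real^'d \<Rightarrow> real" and b :: "real^'d \<Rightarrow> real^'n"
    and grad_\<phi> :: "real^'d \<Rightarrow> real^'d" and Db :: "real^'d \<Rightarrow> real^'d^'n"
  assumes "prob_space M" and "nonatomic M"
    and "X \<in> borel_measurable M" and "integrable M X" and "(\<integral>\<omega>. X \<omega> \<partial>M) = 0"
    and "Y \<in> borel_measurable M" and "integrable M (\<lambda>\<omega>. (norm (Y \<omega>))\<^sup>2)"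
    and phi_deriv: "\<And>u. u \<in> unit_cube \<Longrightarrow>
           (\<phi> has_derivative (\<lambda>h. grad_\<phi> u \<bullet> h)) (at u within unit_cube)"
    and b_deriv: "\<And>u. u \<in> unit_cube \<Longrightarrow>
           (b has_derivative (\<lambda>h. Db u *v h)) (at u within unit_cube)"
    and "continuous_on unit_cube grad_\<phi>" and "continuous_on unit_cube Db"
    and convex: "AE x in distr M lborel X. convex_on unit_cube (\<lambda>u. \<phi> u + b u \<bullet> x)"
    and "U \<in> borel_measurable M" and "distr M lborel U = unif_cube" and "mean_indep_zero M X U"
    and "AE \<omega> in M. Y \<omega> = grad_\<phi> (U \<omega>) + transpose (Db (U \<omega>)) *v X \<omega>"
  shows "feasible M X U \<and>
         (\<forall>V. feasible M X V \<longrightarrow> (\<integral>\<omega>. V \<omega> \<bullet> Y \<omega> \<partial>M) \<le> (\<integral>\<omega>. U \<omega> \<bullet> Y \<omega> \<partial>M))"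
proof -
  note A = assms
  interpret prob_space M by (rule A(1))
  have Um[measurable]: "U \<in> borel_measurable M" "X \<in> borel_measurable M" "Y \<in> borel_measurable M"
    using A by auto
  have FU: "feasible M X U" using A unfolding feasible_def by auto
  have cp: "continuous_on unit_cube \<phi>"
    using phi_deriv has_derivative_continuous continuous_on_eq_continuous_within by blast
  have cq: "continuous_on unit_cube b"
    using b_deriv has_derivative_continuous continuous_on_eq_continuous_within by blast
  have Ccomp: "compact (unit_cube :: (real^'d) set)" unfolding unit_cube_def by (rule compact_cbox)
  have Cborel: "(unit_cube :: (real^'d) set) \<in> sets borel" unfolding unit_cube_def by simp
  define p where "p u = indicator unit_cube u *\<^sub>R \<phi> u" for u
  define q where "q u = indicator unit_cube u *\<^sub>R b u" for u
  have pm: "p \<in> borel_measurable borel" unfolding p_def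
    by (rule borel_measurable_continuous_on_indicator[OF Cborel cp])
  have qm: "q \<in> borel_measurable borel" unfolding q_def
    by (rule borel_measurable_continuous_on_indicator[OF Cborel cq])
  have "bounded (\<phi> ` unit_cube)" by (rule compact_imp_bounded[OF compact_continuous_image[OF cp Ccomp]])
  then obtain Bp where Bp: "\<And>y. y \<in> \<phi> ` unit_cube \<Longrightarrow> norm y \<le> Bp" and Bp0: "0 \<le> Bp"
    unfolding bounded_pos by (meson less_imp_le)
  have pb: "\<bar>p u\<bar> \<le> Bp" for u using Bp[of "\<phi> u"] Bp0 by (auto simp: p_def indicator_def)
  have "bounded (b ` unit_cube)" by (rule compact_imp_bounded[OF compact_continuous_image[OF cq Ccomp]])
  then obtain Bq where Bq: "\<And>y. y \<in> b ` unit_cube \<Longrightarrow> norm y \<le> Bq" and Bq0: "0 \<le> Bq"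
    unfolding bounded_pos by (meson less_imp_le)
  have qb: "norm (q u) \<le> Bq" for u using Bq[of "b u"] Bq0 by (auto simp: q_def indicator_def)
  note FF = feas_facts[OF A(1,3,4,6,7) pm pb qm qb]
  have "(\<integral>\<omega>. V \<omega> \<bullet> Y \<omega> \<partial>M) \<le> (\<integral>\<omega>. U \<omega> \<bullet> Y \<omega> \<partial>M)" if FV: "feasible M X V" for V
  proof -
    note FUf = FF[OF FU] and FVf = FF[OF FV]
    have Vm[measurable]: "V \<in> borel_measurable M" using FV by (simp add: feasible_def)
    have Xl: "X \<in> measurable M lborel" by simp
    have cvx: "AE \<omega> in M. convex_on unit_cube (\<lambda>u. \<phi> u + b u \<bullet> X \<omega>)"
      by (rule AE_distrD[OF Xl convex])
    have pw: "AE \<omega> in M. V \<omega> \<bullet> Y \<omega> \<le> U \<omega> \<bullet> Y \<omega> + (p (V \<omega>) - p (U \<omega>)) + (q (V \<omega>) \<bullet> X \<omega> - q (U \<omega>) \<bullet> X \<omega>)"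
      using FUf(1) FVf(1) cvx A(16)
    proof eventually_elim
      case (elim \<omega>)
      let ?x = "X \<omega>" and ?u = "U \<omega>" and ?v = "V \<omega>"
      have d: "((\<lambda>u. \<phi> u + b u \<bullet> ?x) has_derivative (\<lambda>h. grad_\<phi> ?u \<bullet> h + (Db ?u *v h) \<bullet> ?x)) (at ?u within unit_cube)"
        by (rule has_derivative_add[OF phi_deriv[OF elim(1)] has_derivative_inner_left[OF b_deriv[OF elim(1)]]])
      have g: "grad_\<phi> ?u \<bullet> (?v - ?u) + (Db ?u *v (?v - ?u)) \<bullet> ?x \<le> (\<phi> ?v + b ?v \<bullet> ?x) - (\<phi> ?u + b ?u \<bullet> ?x)"
        using convex_grad[OF elim(3) elim(1) elim(2) d] by simp
      have "(Db ?u *v (?v - ?u)) \<bullet> ?x = (?x v* Db ?u) \<bullet> (?v - ?u)"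
        using dot_lmul_matrix[of "X \<omega>" "Db (U \<omega>)" "V \<omega> - U \<omega>"] by (simp add: inner_commute)
      then have "?v \<bullet> Y \<omega> - ?u \<bullet> Y \<omega> = grad_\<phi> ?u \<bullet> (?v - ?u) + (Db ?u *v (?v - ?u)) \<bullet> ?x"
        using elim(4) by (simp add: inner_diff_left inner_diff_right inner_add_right inner_commute)
      with g show ?case using elim(1,2) by (simp add: p_def q_def)
    qed
    have i1: "integrable M (\<lambda>\<omega>. U \<omega> \<bullet> Y \<omega> + (p (V \<omega>) - p (U \<omega>)) + (q (V \<omega>) \<bullet> X \<omega> - q (U \<omega>) \<bullet> X \<omega>))"
      using FUf FVf by auto
    have "(\<integral>\<omega>. V \<omega> \<bullet> Y \<omega> \<partial>M) \<le> (\<integral>\<omega>. U \<omega> \<bullet> Y \<omega> + (p (V \<omega>) - p (U \<omega>)) + (q (V \<omega>) \<bullet> X \<omega> - q (U \<omega>) \<bullet> X \<omega>) \<partial>M)"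
      by (rule integral_mono_AE[OF FVf(6) i1 pw])
    also have "\<dots> = (\<integral>\<omega>. U \<omega> \<bullet> Y \<omega> \<partial>M) + ((\<integral>\<omega>. p (V \<omega>) \<partial>M) - (\<integral>\<omega>. p (U \<omega>) \<partial>M))
        + ((\<integral>\<omega>. q (V \<omega>) \<bullet> X \<omega> \<partial>M) - (\<integral>\<omega>. q (U \<omega>) \<bullet> X \<omega> \<partial>M))"
      using FUf FVf by (simp add: Bochner_Integration.integral_add Bochner_Integration.integral_diff)
    also have "\<dots> = (\<integral>\<omega>. U \<omega> \<bullet> Y \<omega> \<partial>M)" using FUf(3,5) FVf(3,5) by simp
    finally show ?thesis .
  qed
  then show ?thesis using FU by blast
qed

end
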